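(* Let $A, N_1,\dots,N_m\in\mathbb R^{n\times n}$, $u=(u_1,\dots,u_m)^T\in L^2$, $s\ge 0$ and $x_0\in\mathbb R^n$. Let $x(t)$, $t\ge s$, denote the solution to the homogeneous bilinear equation $$\dot x(t)=Ax(t)+\sum_{k=1}^m N_k x(t)u_k(t),\qquad x(s)=x_0.$$ Then $X(t):=x(t)x^T(t)$, $t\ge s$, satisfies $X(s)=x_0x_0^T$ and the matrix differential inequality $$\dot X(t)\le AX(t)+X(t)A^T+\sum_{k=1}^m N_kX(t)N_k^T+X(t)\|u^0(t)\|_2^2 .$$
   Context: For symmetric matrices $K,L$, $K\le L$ means $L-K$ is symmetric positive semidefinite. $L^2$ is the set of $u:[0,\infty)\to\mathbb R^m$ with $\int_0^\infty u^T(s)u(s)\,ds<\infty$. The vector $u^0=(u^0_1,\dots,u^0_m)^T$ is defined by $u^0_k\equiv 0$ if $N_k=0$ and $u^0_k=u_k$ otherwise. *)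

theory Defs
  imports "HOL-Analysis.Analysis"
begin

definition psd_le :: "real^'n^'n \<Rightarrow> real^'n^'n \<Rightarrow> bool" where
  "psd_le K L \<longleftrightarrow> transpose K = K \<and> transpose L = L \<and>
     (\<forall>v::real^'n. 0 \<le> v \<bullet> ((L - K) *v v))"

definition outer :: "real^'n \<Rightarrow> real^'n \<Rightarrow> real^'n^'n" where
  "outer x y = (\<chi> i j. x $ i * y $ j)"

definition in_L2 :: "nat \<Rightarrow> (real \<Rightarrow> nat \<Rightarrow> real) \<Rightarrow> bool" where
  "in_L2 m u \<longleftrightarrow> (\<forall>k\<in>{1..m}. set_borel_measurable lborel {0..} (\<lambda>t. u t k)) \<and>
     set_integrable lborel {0..} (\<lambda>t. \<Sum>k\<in>{1..m}. (u t k)\<^sup>2)"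

text \<open>Squared Euclidean norm of u^0(t), where u^0_k = 0 if N_k = 0 and u^0_k = u_k otherwise.\<close>
definition u0_norm2 :: "nat \<Rightarrow> (nat \<Rightarrow> real^'n^'n) \<Rightarrow> (real \<Rightarrow> nat \<Rightarrow> real) \<Rightarrow> real \<Rightarrow> real" where
  "u0_norm2 m N u t = (\<Sum>k\<in>{1..m}. if N k = 0 then 0 else (u t k)\<^sup>2)"

text \<open>Solution (Caratheodory sense) of x' = A x + sum_k N_k x u_k, x(s) = x0, on [s,\<infinity>):
  continuous on [s,\<infinity>), initial value x0, and the ODE holds at almost every t > s.\<close>
definition bilinear_solution ::
  "real^'n^'n \<Rightarrow> nat \<Rightarrow> (nat \<Rightarrow> real^'n^'n) \<Rightarrow> (real \<Rightarrow> nat \<Rightarrow> real) \<Rightarrow> real \<Rightarrow> real^'n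
     \<Rightarrow> (real \<Rightarrow> real^'n) \<Rightarrow> bool" where
  "bilinear_solution A m N u s x0 x \<longleftrightarrow>
     continuous_on {s..} x \<and> x s = x0 \<and>
     (AE t in lborel. s < t \<longrightarrow>
        (x has_vector_derivative (A *v x t + (\<Sum>k\<in>{1..m}. u t k *\<^sub>R (N k *v x t)))) (at t))"

end

theory Submission
  imports Defs
begin

lemma outer_add_left: "outer (a+b) c = outer a c + outer b c"
  by (simp add: outer_def vec_eq_iff algebra_simps)
lemma outer_add_right: "outer c (a+b) = outer c a + outer c b"
  by (simp add: outer_def vec_eq_iff algebra_simps)
lemma outer_scale_left: "outer (r *\<^sub>R a) c = r *\<^sub>R outer a c"
  by (simp add: outer_def vec_eq_iff algebra_simps)
lemma outer_scale_right: "outer c (r *\<^sub>R a) = r *\<^sub>R outer c a"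
  by (simp add: outer_def vec_eq_iff algebra_simps)
lemma outer_sum_left: "outer (sum f S) c = (\<Sum>k\<in>S. outer (f k) c)"
  by (simp add: outer_def vec_eq_iff sum_distrib_right)
lemma mat_outer: "(B::real^'n^'n) ** outer a b = outer (B *v a) b"
  by (simp add: outer_def vec_eq_iff matrix_matrix_mult_def matrix_vector_mult_def
      sum_distrib_right mult.assoc)
lemma outer_mat: "outer a b ** transpose (B::real^'n^'n) = outer a (B *v b)"
  by (simp add: outer_def vec_eq_iff matrix_matrix_mult_def matrix_vector_mult_def
      transpose_def sum_distrib_left mult_ac)
lemma transpose_outer: "transpose (outer a b) = outer b a"
  by (simp add: outer_def vec_eq_iff transpose_def)
lemma q_outer: "(w::real^'n) \<bullet> (outer a b *v w) = (w \<bullet> a) * (w \<bullet> b)"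
  apply (simp add: outer_def inner_vec_def matrix_vector_mult_def sum_distrib_left
      sum_distrib_right mult_ac)
  apply (subst sum.swap)
  apply (simp add: mult_ac)
  done

lemma q_add: "(w::real^'n) \<bullet> ((M + M') *v w) = w \<bullet> (M *v w) + w \<bullet> (M' *v w)"
  by (simp add: matrix_vector_mult_add_rdistrib inner_add_right)
lemma q_diff: "(w::real^'n) \<bullet> ((M - M') *v w) = w \<bullet> (M *v w) - w \<bullet> (M' *v w)"
  by (simp add: matrix_vector_mult_diff_rdistrib inner_diff_right)
lemma q_scale: "(w::real^'n) \<bullet> ((r *\<^sub>R M) *v w) = r * (w \<bullet> (M *v w))"
  by (simp add: inner_vec_def matrix_vector_mult_def sum_distrib_left mult_ac)
lemma q_sum: "finite S \<Longrightarrow> (w::real^'n) \<bullet> ((sum f S) *v w) = (\<Sum>k\<in>S. w \<bullet> (f k *v w))"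
  by (induction S rule: finite_induct) (auto simp: q_add)

lemma bb_outer: "bounded_bilinear (outer :: real^'n \<Rightarrow> real^'n \<Rightarrow> real^'n^'n)"
proof -
  have "bilinear (outer :: real^'n \<Rightarrow> real^'n \<Rightarrow> real^'n^'n)"
    unfolding bilinear_def
    by (auto intro!: linearI simp: outer_add_left outer_add_right outer_scale_left outer_scale_right)
  then show ?thesis using bilinear_conv_bounded_bilinear by blast
qed

lemma outer_deriv:
  assumes "(x has_vector_derivative v) (at t)"
  shows "((\<lambda>t. outer (x t) (x t)) has_vector_derivative (outer v (x t) + outer (x t) v)) (at t)"
  using bounded_bilinear.has_vector_derivative[OF bb_outer assms assms] by (simp add: add.commute)

theorem lemma2p2:
  fixes A :: "real^'n^'n" and N :: "nat \<Rightarrow> real^'n^'n" and m :: nat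
    and u :: "real \<Rightarrow> nat \<Rightarrow> real" and s :: real and x0 :: "real^'n"
    and x :: "real \<Rightarrow> real^'n"
  assumes "in_L2 m u" and "s \<ge> 0"
    and "bilinear_solution A m N u s x0 x"
  defines "X \<equiv> (\<lambda>t. outer (x t) (x t))"
  shows "X s = outer x0 x0 \<and>
    (AE t in lborel. s < t \<longrightarrow>
      (\<exists>D. (X has_vector_derivative D) (at t) \<and>
        psd_le D (A ** X t + X t ** transpose A
                  + (\<Sum>k\<in>{1..m}. N k ** X t ** transpose (N k))
                  + u0_norm2 m N u t *\<^sub>R X t)))"
proof -
  have sol: "x s = x0" "AE t in lborel. s < t \<longrightarrow>
        (x has_vector_derivative (A *v x t + (\<Sum>k\<in>{1..m}. u t k *\<^sub>R (N k *v x t)))) (at t)"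
    using assms(3) unfolding bilinear_solution_def by auto
  have main: "\<exists>D. (X has_vector_derivative D) (at t) \<and>
        psd_le D (A ** X t + X t ** transpose A
                  + (\<Sum>k\<in>{1..m}. N k ** X t ** transpose (N k))
                  + u0_norm2 m N u t *\<^sub>R X t)"
    if d: "(x has_vector_derivative (A *v x t + (\<Sum>k\<in>{1..m}. u t k *\<^sub>R (N k *v x t)))) (at t)" for t
  proof -
    define v where "v = A *v x t + (\<Sum>k\<in>{1..m}. u t k *\<^sub>R (N k *v x t))"
    define y where "y = x t"
    define D where "D = outer v y + outer y v"
    define R where "R = A ** X t + X t ** transpose A
                  + (\<Sum>k\<in>{1..m}. N k ** X t ** transpose (N k))
                  + u0_norm2 m N u t *\<^sub>R X t"
    have Xt: "X t = outer y y" by (simp add: X_def y_def)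
    have R: "R = outer (A *v y) y + outer y (A *v y)
                  + (\<Sum>k\<in>{1..m}. outer (N k *v y) (N k *v y))
                  + u0_norm2 m N u t *\<^sub>R outer y y"
      unfolding R_def Xt by (simp add: mat_outer outer_mat matrix_mul_assoc[symmetric])
    have dX: "(X has_vector_derivative D) (at t)"
      unfolding X_def D_def y_def v_def using outer_deriv[OF d] .
    have symD: "transpose D = D" by (simp add: D_def transpose_def outer_def vec_eq_iff mult.commute add.commute)
    have symR: "transpose R = R"
      unfolding R by (simp add: transpose_outer add.commute 
          add.assoc transpose_def vec_eq_iff outer_def sum_component mult.commute)
    have psd: "0 \<le> w \<bullet> ((R - D) *v w)" for w
    proof -
      define b where "b = w \<bullet> y"
      define a where "a = (\<lambda>k. w \<bullet> (N k *v y))"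
      have wv: "w \<bullet> v = w \<bullet> (A *v y) + (\<Sum>k\<in>{1..m}. u t k * a k)"
        by (simp add: v_def y_def a_def inner_add_right inner_sum_right)
      have "w \<bullet> ((R - D) *v w) = (\<Sum>k\<in>{1..m}. (a k)^2 - 2 * u t k * a k * b
             + (if N k = 0 then 0 else (u t k)^2) * b^2)"
        unfolding q_diff R D_def q_add q_sum[OF finite_atLeastAtMost] q_scale q_outer wv
        by (simp add: u0_norm2_def a_def b_def sum.distrib sum_subtractf sum_distrib_left
            sum_distrib_right algebra_simps power2_eq_square inner_commute)
      also have "\<dots> \<ge> 0"
      proof (rule sum_nonneg)
        fix k assume "k \<in> {1..m}"
        show "0 \<le> (a k)^2 - 2 * u t k * a k * b + (if N k = 0 then 0 else (u t k)^2) * b^2"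
        proof (cases "N k = 0")
          case True then show ?thesis by (simp add: a_def)
        next
          case False
          have "0 \<le> (a k - u t k * b)^2" by simp
          then show ?thesis using False by (simp add: power2_eq_square algebra_simps)
        qed
      qed
      finally show ?thesis .
    qed
    show ?thesis unfolding R_def[symmetric]
      using dX symD symR psd unfolding psd_le_def by blast
  qed
  show ?thesis
    using sol main unfolding X_def by (auto elim!: AE_mp)
qed

end
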